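(* Let $U_1$ be a vector space concentrated in degree 1, $U$ the universal Lie superalgebra associated to $U_1$, $G$ a Lie superalgebra with $G_1=U_1$, and $\rho:G_{1-}\to U_{1-}$ the map defined by $\rho(u)=u$ for $u\in G_1$ and $\rho(x)(u)=\rho([x,u])$ for $x\in G_{0-}$, $u\in U_1$. Then $\rho(G_{0-})$ is a subalgebra of $U_{0-}$. If moreover $G$ is positively $0$-transitive and $G_+$ is generated by $G_1$, then $\rho$ restricts to a Lie superalgebra isomorphism $G_{0-}\to\rho(G_{0-})$.
   Context: All vector spaces are over $\mathbb{K}=\mathbb{R}$ or $\mathbb{C}$, $\mathbb{Z}$-graded, parity equal to degree mod 2. A Lie superalgebra is a graded space with degree-preserving bracket satisfying graded antisymmetry and graded Jacobi. $G_\pm=\bigoplus_{k\ge1}G_{\pm k}$, $G_{p-}=\bigoplus_{k\le p}G_k$. $G$ is positively $0$-transitive if for $x\in G_{0-}$, $[G_+,x]=0$ implies $x=0$. Universal Lie superalgebra: for $U_1$ concentrated in degree 1 (odd), put $U_0=\mathrm{End}(U_1)$, $U_{-p+1}=\mathrm{Hom}(U_1,U_{-p+2})$ for $p\ge2$; on $U_{1-}=\bigoplus_{k\le1}U_k$ define brackets recursively by $[x,u]=x(u)$, $[u,x]=-(-1)^{|x|}x(u)$, $[x,y](u)=[x,y(u)]+(-1)^{|y|}[x(u),y]$ ($x,y\in U_{0-}$, $u\in U_1$), giving a semilocal Lie superalgebra; $U$ is the unique Lie superalgebra extending it such that $U_+$ is the free Lie superalgebra generated by $U_1$. *)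

theory Defs
  imports Complex_Main "HOL-Library.Function_Algebras"
begin

definition psign :: "int \<Rightarrow> 'k::field" where
  "psign n = (if even n then 1 else -1)"

definition graded_space :: "('k::field \<Rightarrow> 'g::ab_group_add \<Rightarrow> 'g) \<Rightarrow> (int \<Rightarrow> 'g set) \<Rightarrow> bool" where
  "graded_space sc Gr \<longleftrightarrow> vector_space sc \<and> (\<forall>k. module.subspace sc (Gr k)) \<and>
     (\<forall>x. \<exists>!c::int \<Rightarrow> 'g. finite {k. c k \<noteq> 0} \<and> (\<forall>k. c k \<in> Gr k) \<and>
                       x = (\<Sum>k\<in>{k. c k \<noteq> 0}. c k))"

definition gcomp :: "(int \<Rightarrow> 'g::ab_group_add set) \<Rightarrow> int \<Rightarrow> 'g \<Rightarrow> 'g" where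
  "gcomp Gr k x = (THE c::int \<Rightarrow> 'g. finite {k. c k \<noteq> 0} \<and> (\<forall>k. c k \<in> Gr k) \<and>
                       x = (\<Sum>k\<in>{k. c k \<noteq> 0}. c k)) k"

definition Gle :: "(int \<Rightarrow> 'g::ab_group_add set) \<Rightarrow> int \<Rightarrow> 'g set" where
  "Gle Gr m = {x. \<forall>k>m. gcomp Gr k x = 0}"

definition Gplus :: "(int \<Rightarrow> 'g::ab_group_add set) \<Rightarrow> 'g set" where
  "Gplus Gr = {x. \<forall>k<1. gcomp Gr k x = 0}"

definition lie_superalgebra ::
  "('k::field \<Rightarrow> 'g::ab_group_add \<Rightarrow> 'g) \<Rightarrow> (int \<Rightarrow> 'g set) \<Rightarrow> ('g \<Rightarrow> 'g \<Rightarrow> 'g) \<Rightarrow> bool" where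
  "lie_superalgebra sc Gr br \<longleftrightarrow> graded_space sc Gr \<and>
     (\<forall>x y z. br (x + y) z = br x z + br y z) \<and>
     (\<forall>x y z. br x (y + z) = br x y + br x z) \<and>
     (\<forall>c x y. br (sc c x) y = sc c (br x y)) \<and>
     (\<forall>c x y. br x (sc c y) = sc c (br x y)) \<and>
     (\<forall>i j x y. x \<in> Gr i \<longrightarrow> y \<in> Gr j \<longrightarrow> br x y \<in> Gr (i + j)) \<and>
     (\<forall>i j x y. x \<in> Gr i \<longrightarrow> y \<in> Gr j \<longrightarrow> br x y = - sc (psign (i * j)) (br y x)) \<and>
     (\<forall>i j k x y z. x \<in> Gr i \<longrightarrow> y \<in> Gr j \<longrightarrow> z \<in> Gr k \<longrightarrow>
        br x (br y z) = br (br x y) z + sc (psign (i * j)) (br y (br x z)))"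

definition lie_subalgebra :: "('k::field \<Rightarrow> 'g::ab_group_add \<Rightarrow> 'g) \<Rightarrow> ('g \<Rightarrow> 'g \<Rightarrow> 'g) \<Rightarrow> 'g set \<Rightarrow> bool" where
  "lie_subalgebra sc br S \<longleftrightarrow> module.subspace sc S \<and> (\<forall>x\<in>S. \<forall>y\<in>S. br x y \<in> S)"

definition lie_generated :: "('k::field \<Rightarrow> 'g::ab_group_add \<Rightarrow> 'g) \<Rightarrow> ('g \<Rightarrow> 'g \<Rightarrow> 'g) \<Rightarrow> 'g set \<Rightarrow> 'g set" where
  "lie_generated sc br A = \<Inter>{S. A \<subseteq> S \<and> lie_subalgebra sc br S}"

definition pos_0_transitive :: "(int \<Rightarrow> 'g::ab_group_add set) \<Rightarrow> ('g \<Rightarrow> 'g \<Rightarrow> 'g) \<Rightarrow> bool" where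
  "pos_0_transitive Gr br \<longleftrightarrow> (\<forall>x\<in>Gle Gr 0. (\<forall>y\<in>Gplus Gr. br y x = 0) \<longrightarrow> x = 0)"

text \<open>Elements of U_{1-p} = Hom(U_1, U_{2-p}) (p \<ge> 1), U_1 for p = 0, are identified
  (by uncurrying) with p-multilinear maps U_1^p \<rightarrow> U_1, represented as functions on
  lists of length p. An element of U_{1-} = \<Oplus>_p U_{1-p} is a function on lists whose
  restriction to lists of length p is its component in U_{1-p}.\<close>
definition univ_1minus :: "('k::field \<Rightarrow> 'g::ab_group_add \<Rightarrow> 'g) \<Rightarrow> 'g set \<Rightarrow> ('g list \<Rightarrow> 'g) set" where
  "univ_1minus sc V = {F.
     (\<forall>xs. set xs \<subseteq> V \<longrightarrow> F xs \<in> V) \<and>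
     (\<forall>xs. \<not> set xs \<subseteq> V \<longrightarrow> F xs = 0) \<and>
     (\<forall>a b x y. set a \<subseteq> V \<longrightarrow> set b \<subseteq> V \<longrightarrow> x \<in> V \<longrightarrow> y \<in> V \<longrightarrow>
         F (a @ (x + y) # b) = F (a @ x # b) + F (a @ y # b)) \<and>
     (\<forall>a b c x. set a \<subseteq> V \<longrightarrow> set b \<subseteq> V \<longrightarrow> x \<in> V \<longrightarrow>
         F (a @ sc c x # b) = sc c (F (a @ x # b))) \<and>
     (\<exists>N. \<forall>xs. N < length xs \<longrightarrow> F xs = 0)}"

text \<open>U_{m-} for m \<le> 1: components of degree > m (i.e. list length < 1 - m) vanish.\<close>
definition univ_le :: "('k::field \<Rightarrow> 'g::ab_group_add \<Rightarrow> 'g) \<Rightarrow> 'g set \<Rightarrow> int \<Rightarrow> ('g list \<Rightarrow> 'g) set" where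
  "univ_le sc V m = {F \<in> univ_1minus sc V. \<forall>xs. int (length xs) < 1 - m \<longrightarrow> F xs = 0}"

definition univ_deg :: "('k::field \<Rightarrow> 'g::ab_group_add \<Rightarrow> 'g) \<Rightarrow> 'g set \<Rightarrow> int \<Rightarrow> ('g list \<Rightarrow> 'g) set" where
  "univ_deg sc V d = {F \<in> univ_1minus sc V. \<forall>xs. int (length xs) \<noteq> 1 - d \<longrightarrow> F xs = 0}"

definition uscale :: "('k::field \<Rightarrow> 'g::ab_group_add \<Rightarrow> 'g) \<Rightarrow> 'k \<Rightarrow> ('g list \<Rightarrow> 'g) \<Rightarrow> ('g list \<Rightarrow> 'g)" where
  "uscale sc c F = (\<lambda>xs. sc c (F xs))"

text \<open>Evaluation x(u) of x \<in> U_{0-} at u \<in> U_1.\<close>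
definition uapp :: "('g list \<Rightarrow> 'g) \<Rightarrow> 'g \<Rightarrow> ('g list \<Rightarrow> 'g)" where
  "uapp F u = (\<lambda>vs. F (u # vs))"

definition ulevel :: "nat \<Rightarrow> ('g list \<Rightarrow> 'g::zero) \<Rightarrow> ('g list \<Rightarrow> 'g)" where
  "ulevel p F = (\<lambda>xs. if length xs = p then F xs else 0)"

text \<open>Bracket of a level-p element F with a level-q element H (p + q \<ge> 1), evaluated at a
  list ws of length p + q - 1, following the recursive definition
  [x,u] = x(u), [u,x] = -(-1)^|x| x(u), [x,y](u) = [x,y(u)] + (-1)^|y| [x(u),y].\<close>
fun brl :: "('k::field \<Rightarrow> 'g::ab_group_add \<Rightarrow> 'g) \<Rightarrow> ('g list \<Rightarrow> 'g) \<Rightarrow> nat \<Rightarrow> ('g list \<Rightarrow> 'g) \<Rightarrow> nat \<Rightarrow> 'g list \<Rightarrow> 'g" where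
  "brl sc F p H q [] =
     (if p = 0 then - sc (psign (1 - int q)) (H [F []])
      else if q = 0 then F [H []] else 0)"
| "brl sc F p H q (u # vs) =
     (if p = 0 then - sc (psign (1 - int q)) (H (F [] # u # vs))
      else if q = 0 then F (H [] # u # vs)
      else brl sc F p (uapp H u) (q - 1) vs + sc (psign (1 - int q)) (brl sc (uapp F u) (p - 1) H q vs))"

definition ubr :: "('k::field \<Rightarrow> 'g::ab_group_add \<Rightarrow> 'g) \<Rightarrow> 'g set \<Rightarrow> ('g list \<Rightarrow> 'g) \<Rightarrow> ('g list \<Rightarrow> 'g) \<Rightarrow> ('g list \<Rightarrow> 'g)" where
  "ubr sc V F H = (\<lambda>ws. if set ws \<subseteq> V then
      (\<Sum>p\<in>{0..Suc (length ws)}.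
         brl sc (ulevel p F) p (ulevel (Suc (length ws) - p) H) (Suc (length ws) - p) ws)
      else 0)"

fun rho_aux :: "(int \<Rightarrow> 'g::ab_group_add set) \<Rightarrow> ('g \<Rightarrow> 'g \<Rightarrow> 'g) \<Rightarrow> 'g \<Rightarrow> 'g list \<Rightarrow> 'g" where
  "rho_aux Gr br x [] = gcomp Gr 1 x"
| "rho_aux Gr br x (u # vs) = rho_aux Gr br (br x u) vs"

definition lie_rho :: "(int \<Rightarrow> 'g::ab_group_add set) \<Rightarrow> ('g \<Rightarrow> 'g \<Rightarrow> 'g) \<Rightarrow> 'g \<Rightarrow> ('g list \<Rightarrow> 'g)" where
  "lie_rho Gr br x = (\<lambda>ws. if set ws \<subseteq> Gr 1 then rho_aux Gr br x ws else 0)"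

end

theory Submission
  imports Defs
begin


lemma psign_add: "psign a * psign b = (psign (a + b) :: 'k::field)"
  by (auto simp: psign_def)

lemma psign_sq: "psign a * psign a = (1 :: 'k::field)"
  by (auto simp: psign_def)

fun chain :: "('g \<Rightarrow> 'g \<Rightarrow> 'g) \<Rightarrow> 'g \<Rightarrow> 'g list \<Rightarrow> 'g" where
  "chain br x [] = x"
| "chain br x (u # vs) = chain br (br x u) vs"

lemma rho_aux_chain: "rho_aux Gr br x ws = gcomp Gr 1 (chain br x ws)"
  by (induction ws arbitrary: x) auto

locale LSA =
  fixes sc :: "'k::field \<Rightarrow> 'g::ab_group_add \<Rightarrow> 'g"
    and Gr :: "int \<Rightarrow> 'g set"
    and br :: "'g \<Rightarrow> 'g \<Rightarrow> 'g"
  assumes LS: "lie_superalgebra sc Gr br"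
begin

lemma GS: "graded_space sc Gr" using LS by (simp add: lie_superalgebra_def)

lemma VS: "vector_space sc" using GS by (simp add: graded_space_def)

lemma MOD: "module sc" using VS by (simp add: vector_space_def module_def)

sublocale m: module sc by (rule MOD)

lemma sub: "m.subspace (Gr k)" using GS by (simp add: graded_space_def)

lemma Gr0: "0 \<in> Gr k" using sub m.subspace_0 by blast
lemma Gr_add: "x \<in> Gr k \<Longrightarrow> y \<in> Gr k \<Longrightarrow> x + y \<in> Gr k" using sub m.subspace_add by blast
lemma Gr_sc: "x \<in> Gr k \<Longrightarrow> sc c x \<in> Gr k" using sub m.subspace_scale by blast
lemma Gr_neg: "x \<in> Gr k \<Longrightarrow> - x \<in> Gr k" using sub m.subspace_neg by blast

lemma br_addL_all: "\<forall>x y z. br (x + y) z = br x z + br y z"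
  using LS unfolding lie_superalgebra_def by (elim conjE) assumption
lemma br_addR_all: "\<forall>x y z. br x (y + z) = br x y + br x z"
  using LS unfolding lie_superalgebra_def by (elim conjE) assumption
lemma br_scL_all: "\<forall>c x y. br (sc c x) y = sc c (br x y)"
  using LS unfolding lie_superalgebra_def by (elim conjE) assumption
lemma br_scR_all: "\<forall>c x y. br x (sc c y) = sc c (br x y)"
  using LS unfolding lie_superalgebra_def by (elim conjE) assumption
lemma br_deg_all: "\<forall>i j x y. x \<in> Gr i \<longrightarrow> y \<in> Gr j \<longrightarrow> br x y \<in> Gr (i + j)"
  using LS unfolding lie_superalgebra_def by (elim conjE) assumption
lemmas br_addL = br_addL_all[rule_format]
lemmas br_addR = br_addR_all[rule_format]
lemmas br_scL = br_scL_all[rule_format]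
lemmas br_scR = br_scR_all[rule_format]
lemmas br_deg = br_deg_all[rule_format]
lemma br_anti_all: "\<forall>i j x y. x \<in> Gr i \<longrightarrow> y \<in> Gr j \<longrightarrow> br x y = - sc (psign (i * j)) (br y x)"
  using LS unfolding lie_superalgebra_def by (elim conjE) assumption
lemmas br_anti = br_anti_all[rule_format]
lemma br_jac_all: "\<forall>i j k x y z. x \<in> Gr i \<longrightarrow> y \<in> Gr j \<longrightarrow> z \<in> Gr k \<longrightarrow>
        br x (br y z) = br (br x y) z + sc (psign (i * j)) (br y (br x z))"
  using LS unfolding lie_superalgebra_def by (elim conjE) assumption
lemmas br_jac = br_jac_all[rule_format]

lemma br_0L[simp]: "br 0 y = 0"
proof -
  have "br 0 y = br 0 y + br 0 y" using br_addL[of 0 0 y] unfolding add_0_left .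
  thus ?thesis by (rule add_cancel_right_right[THEN iffD1])
qed
lemma br_0R[simp]: "br x 0 = 0"
proof -
  have "br x 0 = br x 0 + br x 0" using br_addR[of x 0 0] unfolding add_0_left .
  thus ?thesis by (rule add_cancel_right_right[THEN iffD1])
qed
lemma br_sumL: "br (sum f A) y = (\<Sum>i\<in>A. br (f i) y)"
  by (induction A rule: infinite_finite_induct) (auto simp: br_addL)
lemma br_sumR: "br y (sum f A) = (\<Sum>i\<in>A. br y (f i))"
  by (induction A rule: infinite_finite_induct) (auto simp: br_addR)
lemma br_negL: "br (- x) y = - br x y"
proof -
  have "br (- x) y + br x y = 0" by (simp add: br_addL[symmetric])
  thus ?thesis by (simp add: eq_neg_iff_add_eq_0)
qed
lemma br_diffL: "br (x - y) z = br x z - br y z"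
  by (simp only: diff_conv_add_uminus br_addL br_negL)

definition dec :: "'g \<Rightarrow> (int \<Rightarrow> 'g) \<Rightarrow> bool" where
  "dec x c \<longleftrightarrow> finite {k. c k \<noteq> 0} \<and> (\<forall>k. c k \<in> Gr k) \<and> x = (\<Sum>k\<in>{k. c k \<noteq> 0}. c k)"

lemma ex1_dec: "\<exists>!c. dec x c"
proof -
  have "\<forall>x. \<exists>!c::int \<Rightarrow> 'g. finite {k. c k \<noteq> 0} \<and> (\<forall>k. c k \<in> Gr k) \<and>
                       x = (\<Sum>k\<in>{k. c k \<noteq> 0}. c k)"
    using GS unfolding graded_space_def by (elim conjE)
  thus ?thesis unfolding dec_def by (rule spec)
qed

lemma dec_gcomp: "dec x (\<lambda>k. gcomp Gr k x)"
proof -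
  have "dec x (THE c. dec x c)" using ex1_dec by (rule theI')
  moreover have "(THE c. dec x c) = (\<lambda>k. gcomp Gr k x)"
    unfolding gcomp_def dec_def by (rule ext) simp
  ultimately show ?thesis by simp
qed

lemma gc_in: "gcomp Gr k x \<in> Gr k"
  using dec_gcomp[of x] unfolding dec_def by (elim conjE) (erule allE)

lemma gc_fin: "finite {k. gcomp Gr k x \<noteq> 0}"
  using dec_gcomp[of x] unfolding dec_def by (elim conjE)

lemma gc_sum: assumes "finite K" "{k. gcomp Gr k x \<noteq> 0} \<subseteq> K"
  shows "x = (\<Sum>k\<in>K. gcomp Gr k x)"
proof -
  have "x = (\<Sum>k\<in>{k. gcomp Gr k x \<noteq> 0}. gcomp Gr k x)"
    using dec_gcomp[of x] unfolding dec_def by (elim conjE)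
  also have "\<dots> = (\<Sum>k\<in>K. gcomp Gr k x)"
    by (rule sum.mono_neutral_left) (use assms in auto)
  finally show ?thesis .
qed

lemma gc_unique: assumes "finite K" "\<And>k. k \<notin> K \<Longrightarrow> c k = 0" "\<And>k. c k \<in> Gr k"
   "x = (\<Sum>k\<in>K. c k)"
 shows "gcomp Gr k x = c k"
proof -
  have "{k. c k \<noteq> 0} \<subseteq> K" using assms(2) by auto
  hence fin: "finite {k. c k \<noteq> 0}" using assms(1) finite_subset by blast
  have "x = (\<Sum>k\<in>{k. c k \<noteq> 0}. c k)"
    unfolding assms(4) by (rule sum.mono_neutral_right) (use assms(1,2) in auto)
  hence "dec x c" using fin assms(3) unfolding dec_def by blast
  hence "c = (\<lambda>k. gcomp Gr k x)" using ex1_dec dec_gcomp by blast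
  thus ?thesis by simp
qed

lemma gc_homog: assumes "x \<in> Gr d" shows "gcomp Gr k x = (if k = d then x else 0)"
  by (rule gc_unique[of "{d}"]) (use assms Gr0 in auto)

lemma gc_zero[simp]: "gcomp Gr k 0 = 0"
  using gc_homog[OF Gr0[of 0]] by simp

lemma gc_add: "gcomp Gr k (x + y) = gcomp Gr k x + gcomp Gr k y"
proof (rule gc_unique[of "{k. gcomp Gr k x \<noteq> 0} \<union> {k. gcomp Gr k y \<noteq> 0}"])
  let ?K = "{k. gcomp Gr k x \<noteq> 0} \<union> {k. gcomp Gr k y \<noteq> 0}"
  show "finite ?K" using gc_fin by auto
  have hx: "x = (\<Sum>k\<in>?K. gcomp Gr k x)" by (rule gc_sum) (use gc_fin in auto)
  have hy: "y = (\<Sum>k\<in>?K. gcomp Gr k y)" by (rule gc_sum) (use gc_fin in auto)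
  show "x + y = (\<Sum>k\<in>?K. gcomp Gr k x + gcomp Gr k y)"
    by (simp only: sum.distrib flip: hx hy)
qed (auto simp: Gr_add gc_in)

lemma gc_sc: "gcomp Gr k (sc c x) = sc c (gcomp Gr k x)"
proof (rule gc_unique[of "{k. gcomp Gr k x \<noteq> 0}"])
  have hx: "x = (\<Sum>k\<in>{k. gcomp Gr k x \<noteq> 0}. gcomp Gr k x)" by (rule gc_sum) (use gc_fin in auto)
  show "sc c x = (\<Sum>k\<in>{k. gcomp Gr k x \<noteq> 0}. sc c (gcomp Gr k x))"
    unfolding m.scale_sum_right[symmetric] by (simp only: flip: hx)
qed (auto simp: Gr_sc gc_in gc_fin)

lemma gc_neg: "gcomp Gr k (- x) = - gcomp Gr k x"
proof -
  have "gcomp Gr k (- x) + gcomp Gr k x = 0" by (simp add: gc_add[symmetric])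
  thus ?thesis by (simp add: eq_neg_iff_add_eq_0)
qed

lemma gc_diff: "gcomp Gr k (x - y) = gcomp Gr k x - gcomp Gr k y"
  by (simp only: diff_conv_add_uminus gc_add gc_neg)

lemma gc_setsum: "gcomp Gr k (sum f A) = (\<Sum>i\<in>A. gcomp Gr k (f i))"
  by (induction A rule: infinite_finite_induct) (auto simp: gc_add)

lemma all_gc_zero: assumes "\<And>k. gcomp Gr k x = 0" shows "x = 0"
proof -
  have "x = (\<Sum>k\<in>{}. gcomp Gr k x)" by (rule gc_sum) (use assms in auto)
  thus ?thesis by simp
qed

end


context LSA begin

lemma chain_add: "chain br (x + y) ws = chain br x ws + chain br y ws"
  by (induction ws arbitrary: x y) (auto simp: br_addL)
lemma chain_sc: "chain br (sc c x) ws = sc c (chain br x ws)"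
  by (induction ws arbitrary: x) (auto simp: br_scL)
lemma chain_zero[simp]: "chain br 0 ws = 0"
  by (induction ws) auto
lemma chain_neg: "chain br (- x) ws = - chain br x ws"
  by (induction ws arbitrary: x) (auto simp: br_negL)
lemma chain_diff: "chain br (x - y) ws = chain br x ws - chain br y ws"
  by (simp only: diff_conv_add_uminus chain_add chain_neg)
lemma chain_sum: "chain br (sum f A) ws = (\<Sum>i\<in>A. chain br (f i) ws)"
  by (induction A rule: infinite_finite_induct) (auto simp: chain_add)
lemma chain_append: "chain br x (a @ b) = chain br (chain br x a) b"
  by (induction a arbitrary: x) auto

lemma chain_deg: "x \<in> Gr d \<Longrightarrow> set ws \<subseteq> Gr 1 \<Longrightarrow> chain br x ws \<in> Gr (d + int (length ws))"
proof (induction ws arbitrary: x d)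
  case Nil thus ?case by simp
next
  case (Cons u vs)
  have "br x u \<in> Gr (d + 1)" using Cons.prems by (auto intro: br_deg)
  hence "chain br (br x u) vs \<in> Gr (d + 1 + int (length vs))" using Cons by auto
  thus ?case by (simp add: add.assoc)
qed

lemma gc_brR: assumes "y \<in> Gr e" shows "gcomp Gr k (br x y) = br (gcomp Gr (k - e) x) y"
proof -
  let ?S = "{i. gcomp Gr i x \<noteq> 0}"
  let ?K = "(\<lambda>i. i + e) ` ?S"
  show ?thesis
  proof (rule gc_unique[of ?K])
    show "finite ?K" using gc_fin by auto
    show "br (gcomp Gr (k - e) x) y = 0" if "k \<notin> ?K" for k
    proof -
      have "k - e \<notin> ?S" using that by (metis (no_types, lifting) diff_add_cancel image_eqI)
      thus ?thesis by simp
    qed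
    show "br (gcomp Gr (k - e) x) y \<in> Gr k" for k
      using br_deg[OF gc_in assms, of "k - e" x] by simp
    have hx: "x = (\<Sum>i\<in>?S. gcomp Gr i x)" by (rule gc_sum) (use gc_fin in auto)
    have "br x y = (\<Sum>i\<in>?S. br (gcomp Gr i x) y)"
      by (subst hx) (rule br_sumL)
    also have "\<dots> = (\<Sum>k\<in>?K. br (gcomp Gr (k - e) x) y)"
      by (subst sum.reindex) (auto simp: inj_on_def)
    finally show "br x y = (\<Sum>k\<in>?K. br (gcomp Gr (k - e) x) y)" .
  qed
qed

lemma gc_brL: assumes "y \<in> Gr e" shows "gcomp Gr k (br y x) = br y (gcomp Gr (k - e) x)"
proof -
  let ?S = "{i. gcomp Gr i x \<noteq> 0}"
  let ?K = "(\<lambda>i. i + e) ` ?S"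
  show ?thesis
  proof (rule gc_unique[of ?K])
    show "finite ?K" using gc_fin by auto
    show "br y (gcomp Gr (k - e) x) = 0" if "k \<notin> ?K" for k
    proof -
      have "k - e \<notin> ?S" using that by (metis (no_types, lifting) diff_add_cancel image_eqI)
      thus ?thesis by simp
    qed
    show "br y (gcomp Gr (k - e) x) \<in> Gr k" for k
      using br_deg[OF assms gc_in, of "k - e" x] by simp
    have hx: "x = (\<Sum>i\<in>?S. gcomp Gr i x)" by (rule gc_sum) (use gc_fin in auto)
    have "br y x = (\<Sum>i\<in>?S. br y (gcomp Gr i x))"
      by (subst hx) (rule br_sumR)
    also have "\<dots> = (\<Sum>k\<in>?K. br y (gcomp Gr (k - e) x))"
      by (subst sum.reindex) (auto simp: inj_on_def)
    finally show "br y x = (\<Sum>k\<in>?K. br y (gcomp Gr (k - e) x))" .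
  qed
qed

lemma gc_chain: "set ws \<subseteq> Gr 1 \<Longrightarrow> gcomp Gr k (chain br x ws) = chain br (gcomp Gr (k - int (length ws)) x) ws"
proof (induction ws arbitrary: x k)
  case Nil thus ?case by simp
next
  case (Cons u vs)
  have "gcomp Gr k (chain br x (u # vs)) = chain br (gcomp Gr (k - int (length vs)) (br x u)) vs"
    using Cons by simp
  also have "\<dots> = chain br (br (gcomp Gr (k - int (length vs) - 1) x) u) vs"
    using Cons.prems gc_brR[of u 1] by simp
  finally show ?case by (simp add: diff_diff_eq add.commute)
qed

lemma gc_gc: "gcomp Gr k (gcomp Gr j x) = (if k = j then gcomp Gr j x else 0)"
  by (rule gc_homog[OF gc_in])

abbreviation rho where "rho \<equiv> lie_rho Gr br"

lemma rho_eq: "rho x ws = (if set ws \<subseteq> Gr 1 then chain br (gcomp Gr (1 - int (length ws)) x) ws else 0)"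
  by (simp add: lie_rho_def rho_aux_chain gc_chain)

lemma rho_homog: assumes "x \<in> Gr d"
  shows "rho x ws = (if set ws \<subseteq> Gr 1 \<and> d = 1 - int (length ws) then chain br x ws else 0)"
  using assms by (auto simp: rho_eq gc_homog)

lemma rho_level: "ulevel p (rho x) = rho (gcomp Gr (1 - int p) x)"
  by (rule ext) (auto simp: ulevel_def rho_eq gc_gc)

lemma rho_add: "rho (x + y) = rho x + rho y"
  by (rule ext) (simp add: rho_eq gc_add chain_add)
lemma rho_sc: "rho (sc c x) = uscale sc c (rho x)"
  by (rule ext) (simp add: rho_eq gc_sc chain_sc uscale_def)
lemma rho_zero: "rho 0 = 0"
  by (rule ext) (simp add: rho_eq)
lemma rho_neg: "rho (- x) = - rho x"
  by (rule ext) (simp add: rho_eq gc_neg chain_neg)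
lemma rho_diff: "rho (x - y) = rho x - rho y"
  by (rule ext) (simp add: rho_eq gc_diff chain_diff)

lemma rho_cons: "u \<in> Gr 1 \<Longrightarrow> rho x (u # vs) = rho (br x u) vs"
  by (simp add: lie_rho_def)

lemma uapp_rho: "u \<in> Gr 1 \<Longrightarrow> uapp (rho x) u = rho (br x u)"
  by (rule ext) (simp add: uapp_def rho_cons)

end


lemma psign_2: "psign (2 * a + b) = (psign b :: 'k::field)"
  by (auto simp: psign_def)

context LSA begin

lemma jac_u: assumes x: "x \<in> Gr i" and y: "y \<in> Gr j" and u: "u \<in> Gr 1"
  shows "br (br x y) u = br x (br y u) + sc (psign j) (br (br x u) y)"
proof -
  have xu: "br x u \<in> Gr (i + 1)" using br_deg[OF x u] .
  have J: "br x (br y u) = br (br x y) u + sc (psign (i * j)) (br y (br x u))"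
    using br_jac[OF x y u] .
  have A: "br y (br x u) = - sc (psign (j * (i + 1))) (br (br x u) y)"
    using br_anti[OF y xu] .
  have "sc (psign (i * j)) (br y (br x u)) = - sc (psign (i * j) * psign (j * (i + 1))) (br (br x u) y)"
    unfolding A by simp
  also have "psign (i * j) * psign (j * (i + 1)) = (psign j :: 'k)"
  proof -
    have "i * j + j * (i + 1) = 2 * (i * j) + j" by (simp add: algebra_simps)
    thus ?thesis by (simp add: psign_add psign_2)
  qed
  finally have "sc (psign (i * j)) (br y (br x u)) = - sc (psign j) (br (br x u) y)" .
  with J show ?thesis by (simp add: algebra_simps)
qed

lemma rho_neg_sc: "rho (- sc c z) ws = - sc c (rho z ws)"
  by (simp add: rho_neg rho_sc uscale_def)

lemma brl_rho:
  "set ws \<subseteq> Gr 1 \<Longrightarrow> length ws + 1 = p + q \<Longrightarrow> x \<in> Gr (1 - int p) \<Longrightarrow> y \<in> Gr (1 - int q) \<Longrightarrow>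
   brl sc (rho x) p (rho y) q ws = rho (br x y) ws"
proof (induction ws arbitrary: x y p q)
  case Nil
  show ?case
  proof (cases p)
    case 0
    hence q: "q = 1" using Nil by simp
    have x1: "x \<in> Gr 1" using Nil 0 by simp
    have y0: "y \<in> Gr 0" using Nil q by simp
    have rx: "rho x [] = x" using x1 by (simp add: rho_homog)
    have "rho y [x] = br y x"
      using x1 y0 by (simp add: rho_homog br_deg)
    moreover have "rho (br x y) [] = br x y" using br_deg[OF x1 y0] by (simp add: rho_homog)
    moreover have "br x y = - br y x" using br_anti[OF x1 y0] by (simp add: psign_def)
    ultimately show ?thesis using 0 q rx by (simp add: psign_def)
  next
    case (Suc p')
    hence pq: "p = 1" "q = 0" using Nil by auto
    have x0: "x \<in> Gr 0" using Nil pq by simp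
    have y1: "y \<in> Gr 1" using Nil pq by simp
    have ry: "rho y [] = y" using y1 by (simp add: rho_homog)
    have "rho x [y] = br x y"
      using x0 y1 by (simp add: rho_homog br_deg)
    moreover have "rho (br x y) [] = br x y" using br_deg[OF x0 y1] by (simp add: rho_homog)
    ultimately show ?thesis using pq ry by simp
  qed
next
  case (Cons u vs)
  have u: "u \<in> Gr 1" and vs: "set vs \<subseteq> Gr 1" using Cons.prems by auto
  show ?case
  proof (cases "p = 0")
    case True
    have x1: "x \<in> Gr 1" using Cons.prems True by simp
    have rx: "rho x [] = x" using x1 by (simp add: rho_homog)
    have "brl sc (rho x) p (rho y) q (u # vs) = - sc (psign (1 - int q)) (rho y (x # u # vs))"
      using True rx by simp
    also have "rho y (x # u # vs) = rho (br y x) (u # vs)" using x1 by (simp add: rho_cons)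
    also have "br y x = - sc (psign ((1 - int q) * 1)) (br x y)"
      using br_anti[OF Cons.prems(4) x1] .
    finally have "brl sc (rho x) p (rho y) q (u # vs) = - sc (psign (1 - int q)) (- sc (psign (1 - int q)) (rho (br x y) (u # vs)))"
      by (simp add: rho_neg_sc)
    also have "\<dots> = rho (br x y) (u # vs)"
      by (simp add: psign_sq)
    finally show ?thesis .
  next
    case pF: False
    show ?thesis
    proof (cases "q = 0")
      case True
      have y1: "y \<in> Gr 1" using Cons.prems True by simp
      have ry: "rho y [] = y" using y1 by (simp add: rho_homog)
      have "brl sc (rho x) p (rho y) q (u # vs) = rho x (y # u # vs)"
        using True pF ry by simp
      also have "\<dots> = rho (br x y) (u # vs)" using y1 by (simp add: rho_cons)
      finally show ?thesis .
    next
      case qF: False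
      have e: "brl sc (rho x) p (rho y) q (u # vs) =
          brl sc (rho x) p (rho (br y u)) (q - 1) vs + sc (psign (1 - int q)) (brl sc (rho (br x u)) (p - 1) (rho y) q vs)"
        using pF qF u by (simp add: uapp_rho)
      have yu: "br y u \<in> Gr (1 - int (q - 1))" using br_deg[OF Cons.prems(4) u] qF by (simp add: of_nat_diff)
      have xu: "br x u \<in> Gr (1 - int (p - 1))" using br_deg[OF Cons.prems(3) u] pF by (simp add: of_nat_diff)
      have I1: "brl sc (rho x) p (rho (br y u)) (q - 1) vs = rho (br x (br y u)) vs"
        by (rule Cons.IH[OF vs _ Cons.prems(3) yu]) (use Cons.prems(2) qF in simp)
      have I2: "brl sc (rho (br x u)) (p - 1) (rho y) q vs = rho (br (br x u) y) vs"
        by (rule Cons.IH[OF vs _ xu Cons.prems(4)]) (use Cons.prems(2) pF in simp)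
      have "brl sc (rho x) p (rho y) q (u # vs) = rho (br x (br y u) + sc (psign (1 - int q)) (br (br x u) y)) vs"
        unfolding e I1 I2 by (simp add: rho_add rho_sc uscale_def)
      also have "br x (br y u) + sc (psign (1 - int q)) (br (br x u) y) = br (br x y) u"
        using jac_u[OF Cons.prems(3) Cons.prems(4) u] by simp
      also have "rho (br (br x y) u) vs = rho (br x y) (u # vs)" using u by (simp add: rho_cons)
      finally show ?thesis .
    qed
  qed
qed

end


context LSA begin

lemma gc_br: assumes "finite K" "\<And>i. i \<notin> K \<Longrightarrow> br (gcomp Gr i x) (gcomp Gr (m - i) y) = 0"
  shows "gcomp Gr m (br x y) = (\<Sum>i\<in>K. br (gcomp Gr i x) (gcomp Gr (m - i) y))"
proof -
  let ?S = "{i. gcomp Gr i x \<noteq> 0}"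
  have hx: "x = (\<Sum>i\<in>?S. gcomp Gr i x)" by (rule gc_sum) (use gc_fin in auto)
  have "gcomp Gr m (br x y) = (\<Sum>i\<in>?S. gcomp Gr m (br (gcomp Gr i x) y))"
    by (subst hx) (simp only: br_sumL gc_setsum)
  also have "\<dots> = (\<Sum>i\<in>?S. br (gcomp Gr i x) (gcomp Gr (m - i) y))"
    by (rule sum.cong) (auto simp: gc_brL[OF gc_in])
  also have "\<dots> = (\<Sum>i\<in>?S \<union> K. br (gcomp Gr i x) (gcomp Gr (m - i) y))"
    by (rule sum.mono_neutral_left) (use gc_fin assms in auto)
  also have "\<dots> = (\<Sum>i\<in>K. br (gcomp Gr i x) (gcomp Gr (m - i) y))"
    by (rule sum.mono_neutral_right) (use gc_fin assms in auto)
  finally show ?thesis .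
qed

lemma Gle_br: assumes "x \<in> Gle Gr 0" "y \<in> Gle Gr 0" shows "br x y \<in> Gle Gr 0"
  unfolding Gle_def
proof (intro CollectI allI impI)
  fix k :: int assume k: "k > 0"
  have "gcomp Gr k (br x y) = (\<Sum>i\<in>{}. br (gcomp Gr i x) (gcomp Gr (k - i) y))"
  proof (rule gc_br)
    fix i
    show "br (gcomp Gr i x) (gcomp Gr (k - i) y) = 0"
    proof (cases "i > 0")
      case True thus ?thesis using assms(1) by (simp add: Gle_def)
    next
      case False thus ?thesis using assms(2) k by (simp add: Gle_def)
    qed
  qed simp
  thus "gcomp Gr k (br x y) = 0" by simp
qed

lemma Gle_add: "x \<in> Gle Gr 0 \<Longrightarrow> y \<in> Gle Gr 0 \<Longrightarrow> x + y \<in> Gle Gr 0"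
  by (simp add: Gle_def gc_add)
lemma Gle_diff: "x \<in> Gle Gr 0 \<Longrightarrow> y \<in> Gle Gr 0 \<Longrightarrow> x - y \<in> Gle Gr 0"
  by (simp add: Gle_def gc_diff)
lemma Gle_sc: "x \<in> Gle Gr 0 \<Longrightarrow> sc c x \<in> Gle Gr 0"
  by (simp add: Gle_def gc_sc)
lemma Gle_zero: "0 \<in> Gle Gr 0"
  by (simp add: Gle_def)

lemma rho_hom: assumes x: "x \<in> Gle Gr 0" and y: "y \<in> Gle Gr 0"
  shows "rho (br x y) = ubr sc (Gr 1) (rho x) (rho y)"
proof (rule ext)
  fix ws
  show "rho (br x y) ws = ubr sc (Gr 1) (rho x) (rho y) ws"
  proof (cases "set ws \<subseteq> Gr 1")
    case False thus ?thesis by (simp add: ubr_def lie_rho_def)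
  next
    case True
    define L where "L = length ws"
    let ?P = "{0..Suc L}"
    let ?t = "\<lambda>i. br (gcomp Gr i x) (gcomp Gr (1 - int L - i) y)"
    have "ubr sc (Gr 1) (rho x) (rho y) ws =
       (\<Sum>p\<in>?P. brl sc (rho (gcomp Gr (1 - int p) x)) p (rho (gcomp Gr (1 - int (Suc L - p)) y)) (Suc L - p) ws)"
      using True by (simp add: ubr_def rho_level L_def)
    also have "\<dots> = (\<Sum>p\<in>?P. rho (?t (1 - int p)) ws)"
    proof (rule sum.cong[OF refl])
      fix p assume p: "p \<in> ?P"
      have h: "brl sc (rho (gcomp Gr (1 - int p) x)) p (rho (gcomp Gr (1 - int (Suc L - p)) y)) (Suc L - p) ws
         = rho (br (gcomp Gr (1 - int p) x) (gcomp Gr (1 - int (Suc L - p)) y)) ws"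
        by (rule brl_rho) (use True p gc_in in \<open>auto simp: L_def\<close>)
      have eq: "1 - int (Suc L - p) = 1 - int L - (1 - int p)" using p by (simp add: of_nat_diff)
      show "brl sc (rho (gcomp Gr (1 - int p) x)) p (rho (gcomp Gr (1 - int (Suc L - p)) y)) (Suc L - p) ws
         = rho (?t (1 - int p)) ws" using h unfolding eq .
    qed
    also have "\<dots> = (\<Sum>p\<in>?P. chain br (?t (1 - int p)) ws)"
    proof (rule sum.cong[OF refl])
      fix p assume p: "p \<in> ?P"
      have "?t (1 - int p) \<in> Gr (1 - int p + (1 - int L - (1 - int p)))"
        by (rule br_deg[OF gc_in gc_in])
      thus "rho (?t (1 - int p)) ws = chain br (?t (1 - int p)) ws"
        using True by (simp add: rho_homog L_def)
    qed
    also have "\<dots> = (\<Sum>i\<in>(\<lambda>p. 1 - int p) ` ?P. chain br (?t i) ws)"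
      by (subst sum.reindex) (auto simp: inj_on_def)
    also have "\<dots> = chain br (\<Sum>i\<in>(\<lambda>p. 1 - int p) ` ?P. ?t i) ws"
      by (simp add: chain_sum)
    also have "(\<Sum>i\<in>(\<lambda>p. 1 - int p) ` ?P. ?t i) = gcomp Gr (1 - int L) (br x y)"
    proof (rule gc_br[symmetric])
      show "finite ((\<lambda>p. 1 - int p) ` ?P)" by simp
      fix i assume i: "i \<notin> (\<lambda>p. 1 - int p) ` ?P"
      have "i > 0 \<or> 1 - int L - i > 0"
      proof (rule ccontr)
        assume "\<not> ?thesis"
        hence "i \<le> 0" "i \<ge> - int L" by auto
        hence "nat (1 - i) \<in> ?P" "i = 1 - int (nat (1 - i))" by auto
        thus False using i by blast
      qed
      thus "br (gcomp Gr i x) (gcomp Gr (1 - int L - i) y) = 0"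
        using x y by (auto simp: Gle_def)
    qed
    also have "chain br (gcomp Gr (1 - int L) (br x y)) ws = rho (br x y) ws"
      using True by (simp add: rho_eq L_def)
    finally show ?thesis ..
  qed
qed

end


context LSA begin

lemma rho_1minus: "rho x \<in> univ_1minus sc (Gr 1)"
proof -
  let ?S = "{k. gcomp Gr k x \<noteq> 0}"
  obtain M where M: "\<And>k. k \<in> ?S \<Longrightarrow> M \<le> k"
    using gc_fin[of x] by (metis Min_le)
  have fin: "\<exists>N. \<forall>xs. N < length xs \<longrightarrow> rho x xs = 0"
  proof (intro exI allI impI)
    fix xs :: "'g list" assume "nat (1 - M) < length xs"
    hence "1 - int (length xs) < M" by linarith
    hence "gcomp Gr (1 - int (length xs)) x = 0" using M by force
    thus "rho x xs = 0" by (simp add: rho_eq)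
  qed
  have add: "rho x (a @ (u + v) # b) = rho x (a @ u # b) + rho x (a @ v # b)"
    if "set a \<subseteq> Gr 1" "set b \<subseteq> Gr 1" "u \<in> Gr 1" "v \<in> Gr 1" for a b u v
    using that Gr_add[of u 1 v]
    by (simp add: lie_rho_def rho_aux_chain chain_append br_addR chain_add gc_add)
  have scl: "rho x (a @ sc c u # b) = sc c (rho x (a @ u # b))"
    if "set a \<subseteq> Gr 1" "set b \<subseteq> Gr 1" "u \<in> Gr 1" for a b c u
    using that Gr_sc[of u 1 c]
    by (simp add: lie_rho_def rho_aux_chain chain_append br_scR chain_sc gc_sc)
  show ?thesis unfolding univ_1minus_def
    using fin add scl by (auto simp: lie_rho_def rho_aux_chain gc_in)
qed

lemma rho_le: "x \<in> Gle Gr 0 \<Longrightarrow> rho x \<in> univ_le sc (Gr 1) 0"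
  unfolding univ_le_def using rho_1minus by (auto simp: rho_eq Gle_def)

lemma rho_deg: "k \<le> 0 \<Longrightarrow> x \<in> Gr k \<Longrightarrow> rho x \<in> univ_deg sc (Gr 1) k"
  unfolding univ_deg_def using rho_1minus by (auto simp: rho_homog)

lemma MODU: "module (uscale sc)"
  by unfold_locales (auto simp: uscale_def fun_eq_iff m.scale_right_distrib m.scale_left_distrib)

lemma subalg: "lie_subalgebra (uscale sc) (ubr sc (Gr 1)) (rho ` Gle Gr 0)"
  unfolding lie_subalgebra_def module.subspace_def[OF MODU]
proof (intro conjI ballI allI)
  show "0 \<in> rho ` Gle Gr 0" using rho_zero Gle_zero by (metis image_eqI)
next
  fix F H assume "F \<in> rho ` Gle Gr 0" "H \<in> rho ` Gle Gr 0"
  then obtain x y where "x \<in> Gle Gr 0" "y \<in> Gle Gr 0" "F = rho x" "H = rho y" by auto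
  thus "F + H \<in> rho ` Gle Gr 0" "ubr sc (Gr 1) F H \<in> rho ` Gle Gr 0"
    by (metis Gle_add image_eqI rho_add, metis Gle_br image_eqI rho_hom)
next
  fix c F assume "F \<in> rho ` Gle Gr 0"
  then obtain x where "x \<in> Gle Gr 0" "F = rho x" by auto
  thus "uscale sc c F \<in> rho ` Gle Gr 0" by (metis Gle_sc image_eqI rho_sc)
qed

lemma kill_lemma:
  assumes P0: "pos_0_transitive Gr br" and gen: "Gplus Gr \<subseteq> lie_generated sc br (Gr 1)"
    and x: "x \<in> Gr d" and d: "d \<le> 0" and ku: "\<And>u. u \<in> Gr 1 \<Longrightarrow> br x u = 0"
  shows "x = 0"
proof -
  define S where "S = {y. \<forall>k. br (gcomp Gr k y) x = 0}"
  have sub: "lie_subalgebra sc br S"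
    unfolding lie_subalgebra_def m.subspace_def
  proof (intro conjI ballI allI)
    show "0 \<in> S" by (simp add: S_def)
  next
    fix y z assume y: "y \<in> S" and z: "z \<in> S"
    show "y + z \<in> S" using y z by (simp add: S_def gc_add br_addL)
    show "br y z \<in> S" unfolding S_def
    proof (intro CollectI allI)
      fix k
      have "gcomp Gr k (br y z) = (\<Sum>i\<in>{i. gcomp Gr i y \<noteq> 0}. br (gcomp Gr i y) (gcomp Gr (k - i) z))"
        by (rule gc_br) (use gc_fin in auto)
      hence "br (gcomp Gr k (br y z)) x = (\<Sum>i\<in>{i. gcomp Gr i y \<noteq> 0}. br (br (gcomp Gr i y) (gcomp Gr (k - i) z)) x)"
        by (simp add: br_sumL)
      also have "\<dots> = 0"
      proof (rule sum.neutral, rule ballI)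
        fix i
        have J: "br (gcomp Gr i y) (br (gcomp Gr (k - i) z) x) = br (br (gcomp Gr i y) (gcomp Gr (k - i) z)) x
            + sc (psign (i * (k - i))) (br (gcomp Gr (k - i) z) (br (gcomp Gr i y) x))"
          by (rule br_jac[OF gc_in gc_in x])
        have "br (gcomp Gr (k - i) z) x = 0" "br (gcomp Gr i y) x = 0" using y z by (auto simp: S_def)
        with J show "br (br (gcomp Gr i y) (gcomp Gr (k - i) z)) x = 0" by simp
      qed
      finally show "br (gcomp Gr k (br y z)) x = 0" .
    qed
  next
    fix c y assume y: "y \<in> S"
    show "sc c y \<in> S" using y by (simp add: S_def gc_sc br_scL)
  qed
  have G1: "Gr 1 \<subseteq> S"
  proof
    fix y assume y: "y \<in> Gr 1"
    have "br y x = 0" using br_anti[OF y x] ku[OF y] by simp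
    thus "y \<in> S" using y by (simp add: S_def gc_homog)
  qed
  have "lie_generated sc br (Gr 1) \<subseteq> S"
    unfolding lie_generated_def using sub G1 by blast
  hence GS: "Gplus Gr \<subseteq> S" using gen by blast
  have xle: "x \<in> Gle Gr 0" using x d by (auto simp: Gle_def gc_homog)
  have "\<forall>y\<in>Gplus Gr. br y x = 0"
  proof
    fix y assume "y \<in> Gplus Gr"
    hence yS: "y \<in> S" using GS by blast
    have hy: "y = (\<Sum>k\<in>{k. gcomp Gr k y \<noteq> 0}. gcomp Gr k y)" by (rule gc_sum) (use gc_fin in auto)
    have "br y x = (\<Sum>k\<in>{k. gcomp Gr k y \<noteq> 0}. br (gcomp Gr k y) x)"
      by (subst hy) (rule br_sumL)
    also have "\<dots> = 0" using yS by (simp add: S_def)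
    finally show "br y x = 0" .
  qed
  thus "x = 0" using P0 xle unfolding pos_0_transitive_def by blast
qed

lemma inj_homog:
  assumes P0: "pos_0_transitive Gr br" and gen: "Gplus Gr \<subseteq> lie_generated sc br (Gr 1)"
  shows "x \<in> Gr (- int n) \<Longrightarrow> rho x = 0 \<Longrightarrow> x = 0"
proof (induction n arbitrary: x)
  case 0
  show ?case
  proof (rule kill_lemma[OF P0 gen 0(1)])
    fix u assume u: "u \<in> Gr 1"
    have "rho x [u] = br x u" using 0(1) u by (simp add: rho_homog)
    thus "br x u = 0" using 0(2) by simp
  qed simp
next
  case (Suc n)
  show ?case
  proof (rule kill_lemma[OF P0 gen Suc(2)])
    fix u assume u: "u \<in> Gr 1"
    have d: "br x u \<in> Gr (- int n)" using br_deg[OF Suc(2) u] by simp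
    have "rho (br x u) = uapp (rho x) u" using uapp_rho[OF u] by simp
    also have "\<dots> = 0" using Suc(3) by (simp add: uapp_def fun_eq_iff)
    finally show "br x u = 0" using Suc.IH[OF d] by simp
  qed simp
qed

lemma inj_rho:
  assumes P0: "pos_0_transitive Gr br" and gen: "Gplus Gr \<subseteq> lie_generated sc br (Gr 1)"
  shows "inj_on rho (Gle Gr 0)"
proof (rule inj_onI)
  have kill: "z = 0" if z: "z \<in> Gle Gr 0" "rho z = 0" for z
  proof (rule all_gc_zero)
    fix k
    show "gcomp Gr k z = 0"
    proof (cases "k > 0")
      case True thus ?thesis using z by (simp add: Gle_def)
    next
      case False
      have "rho (gcomp Gr (1 - int (nat (1 - k))) z) = ulevel (nat (1 - k)) (rho z)"
        by (simp add: rho_level)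
      also have "\<dots> = 0" using z by (simp add: ulevel_def fun_eq_iff)
      finally have r: "rho (gcomp Gr k z) = 0" using False by simp
      have "gcomp Gr k z \<in> Gr (- int (nat (- k)))" using False gc_in[of k z] by simp
      thus ?thesis using inj_homog[OF P0 gen] r by blast
    qed
  qed
  fix x y assume "x \<in> Gle Gr 0" "y \<in> Gle Gr 0" "rho x = rho y"
  hence "x - y = 0" using kill[of "x - y"] Gle_diff rho_diff by simp
  thus "x = y" by simp
qed

end

theorem corollary3p4:
  fixes sc :: "'k::real_normed_field \<Rightarrow> 'g::ab_group_add \<Rightarrow> 'g"
    and Gr :: "int \<Rightarrow> 'g set"
    and br :: "'g \<Rightarrow> 'g \<Rightarrow> 'g"
  assumes "lie_superalgebra sc Gr br"
  shows "(lie_rho Gr br ` Gle Gr 0 \<subseteq> univ_le sc (Gr 1) 0 \<and>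
          lie_subalgebra (uscale sc) (ubr sc (Gr 1)) (lie_rho Gr br ` Gle Gr 0))
       \<and> (pos_0_transitive Gr br \<and> Gplus Gr = lie_generated sc br (Gr 1) \<longrightarrow>
          (\<forall>x\<in>Gle Gr 0. \<forall>y\<in>Gle Gr 0. lie_rho Gr br (x + y) = lie_rho Gr br x + lie_rho Gr br y) \<and>
          (\<forall>c. \<forall>x\<in>Gle Gr 0. lie_rho Gr br (sc c x) = uscale sc c (lie_rho Gr br x)) \<and>
          (\<forall>x\<in>Gle Gr 0. \<forall>y\<in>Gle Gr 0.
              lie_rho Gr br (br x y) = ubr sc (Gr 1) (lie_rho Gr br x) (lie_rho Gr br y)) \<and>
          (\<forall>k\<le>0. lie_rho Gr br ` Gr k \<subseteq> univ_deg sc (Gr 1) k) \<and>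
          inj_on (lie_rho Gr br) (Gle Gr 0))"
proof -
  interpret L: LSA sc Gr br by unfold_locales (rule assms)
  show ?thesis
    using L.rho_le L.subalg L.rho_add L.rho_sc L.rho_hom L.rho_deg L.inj_rho
    by blast
qed


end
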